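(* Let $\alpha>0$, $\beta>0$, and for $R>0$ let $\kappa_0=\kappa_0(R)>0$ be the unique solution of $K_0(\kappa R)I_0(\kappa R)=\frac{1}{(\alpha+\beta)R}$ and $$t_0(R):=\frac{2\kappa_0 I_0K_0\left(-\alpha\beta R\,I_0K_0+\alpha\kappa_0R\,(I_0K_0)'+\alpha\,I_0K_0\right)}{R\,(I_0K_0)'},$$ with $I_0K_0$ and $(I_0K_0)'$ the values of $z\mapsto I_0(z)K_0(z)$ and of its derivative at $z=R\kappa_0$. Then $t_0(R)<0$ for all sufficiently small $R>0$, and $t_0(R)>0$ for all sufficiently large $R$. In particular, the sign of the first-order correction for approaching circles is not determined in general. *)

theory Defs
  imports "HOL-Analysis.Analysis"
begin

definition besselI0 :: "real \<Rightarrow> real" where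
  "besselI0 z = (\<Sum>k. (z / 2) ^ (2 * k) / (fact k)\<^sup>2)"

text \<open>Modified Bessel function of the second kind of order 0, for z > 0,
  via the integral representation K_0(z) = int_0^infty exp(-z cosh t) dt.\<close>
definition besselK0 :: "real \<Rightarrow> real" where
  "besselK0 z = (LINT t:{0..}|lborel. exp (- (z * cosh t)))"

definition kappa0 :: "real \<Rightarrow> real \<Rightarrow> real \<Rightarrow> real" where
  "kappa0 \<alpha> \<beta> R = (THE \<kappa>. \<kappa> > 0 \<and>
      besselK0 (\<kappa> * R) * besselI0 (\<kappa> * R) = 1 / ((\<alpha> + \<beta>) * R))"

definition IK0 :: "real \<Rightarrow> real" where
  "IK0 z = besselI0 z * besselK0 z"

definition t0 :: "real \<Rightarrow> real \<Rightarrow> real \<Rightarrow> real" where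
  "t0 \<alpha> \<beta> R =
     (let \<kappa> = kappa0 \<alpha> \<beta> R; z = R * \<kappa>; p = IK0 z; dp = deriv IK0 z in
      2 * \<kappa> * p * (- \<alpha> * \<beta> * R * p + \<alpha> * \<kappa> * R * dp + \<alpha> * p) / (R * dp))"

end

theory Submission
  imports Defs
begin

definition I1 :: "real \<Rightarrow> real" where
  "I1 z = (z/2) * (\<Sum>n. (z^2/4)^n / (fact n * fact (Suc n)))"

definition cI :: "nat \<Rightarrow> real" where "cI k = 1 / (fact k)^2"

lemma summable_cI: "summable (\<lambda>k. cI k * w^k)"
proof (rule summable_comparison_test[where g="\<lambda>k. inverse (fact k) * \<bar>w\<bar>^k"])
  show "summable (\<lambda>k. inverse (fact k) * \<bar>w\<bar>^k)" by (rule summable_exp)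
  show "\<exists>N. \<forall>n\<ge>N. norm (cI n * w ^ n) \<le> inverse (fact n) * \<bar>w\<bar> ^ n"
  proof (intro exI allI impI)
    fix n :: nat
    have f1: "(1::real) \<le> fact n" by simp
    have "1 / (fact n)^2 \<le> inverse (fact n :: real)"
      using f1 by (simp add: power2_eq_square field_simps)
    then have "cI n * \<bar>w\<bar>^n \<le> inverse (fact n) * \<bar>w\<bar> ^ n"
      unfolding cI_def by (rule mult_right_mono) simp
    moreover have "norm (cI n * w ^ n) = cI n * \<bar>w\<bar>^n" by (simp add: cI_def abs_mult power_abs)
    ultimately show "norm (cI n * w ^ n) \<le> inverse (fact n) * \<bar>w\<bar> ^ n" by simp
  qed
qed

lemma I0_eq: "besselI0 z = (\<Sum>k. cI k * (z^2/4)^k)"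
proof -
  have "(z/2)^(2*k) / (fact k)^2 = cI k * (z^2/4)^k" for k
    by (simp add: cI_def power_mult power_divide)
  then show ?thesis unfolding besselI0_def by simp
qed

lemma diffs_cI: "diffs cI n = 1 / (fact n * fact (Suc n))"
proof -
  have F: "(fact n :: real) > 0" by simp
  have "diffs cI n = (1 + real n) / ((1 + real n) * fact n * ((1 + real n) * fact n))"
    by (simp add: diffs_def cI_def power2_eq_square algebra_simps)
  also have "\<dots> = 1 / (fact n * ((1 + real n) * fact n))"
    using F by (simp add: divide_simps)
  finally show ?thesis by (simp add: algebra_simps)
qed

lemma I0_deriv: "(besselI0 has_field_derivative I1 z) (at z)"
proof -
  have g: "((\<lambda>w. \<Sum>n. cI n * w^n) has_field_derivative (\<Sum>n. diffs cI n * w^n)) (at w)" for w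
    by (rule termdiffs_strong_converges_everywhere) (rule summable_cI)
  have h: "((\<lambda>z::real. z^2/4) has_field_derivative (z/2)) (at z)"
    by (auto intro!: derivative_eq_intros)
  have "((\<lambda>z. \<Sum>n. cI n * (z^2/4)^n) has_field_derivative (\<Sum>n. diffs cI n * (z^2/4)^n) * (z/2)) (at z)"
    using DERIV_chain2[OF g h] by simp
  moreover have "(\<Sum>n. diffs cI n * (z^2/4)^n) * (z/2) = I1 z"
    unfolding I1_def diffs_cI by (simp add: mult.commute)
  ultimately show ?thesis
    by (simp add: I0_eq[abs_def])
qed

lemma I0_ge1: "besselI0 z \<ge> 1"
proof -
  have s: "summable (\<lambda>k. cI k * (z^2/4)^k)" by (rule summable_cI)
  have "(\<Sum>n. cI (Suc n) * (z^2/4)^(Suc n)) \<ge> 0"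
  proof (rule suminf_nonneg)
    show "summable (\<lambda>n. cI (Suc n) * (z^2/4)^(Suc n))" by (rule iffD2[OF summable_Suc_iff s])
  qed (simp add: cI_def)
  moreover have "(\<Sum>n. cI (Suc n) * (z^2/4)^(Suc n)) = besselI0 z - 1"
    using suminf_split_head[OF s] by (simp add: I0_eq cI_def)
  ultimately show ?thesis by simp
qed

lemma I0_mono: assumes "0 \<le> x" "x \<le> y" shows "besselI0 x \<le> besselI0 y"
  unfolding I0_eq
proof (rule suminf_le[OF _ summable_cI summable_cI])
  fix n
  have "x^2/4 \<le> y^2/4" using assms by (simp add: power_mono)
  then have "(x^2/4)^n \<le> (y^2/4)^n" by (simp add: power_mono)
  then show "cI n * (x^2/4)^n \<le> cI n * (y^2/4)^n" by (simp add: cI_def divide_right_mono)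
qed

lemma summable_I1: "summable (\<lambda>n. (w::real)^n / (fact n * fact (Suc n)))"
proof -
  have "summable (\<lambda>n. diffs cI n * w^n)"
    by (rule termdiff_converges_all) (rule summable_cI)
  then show ?thesis by (simp add: diffs_cI)
qed

lemma I1_nonneg: assumes "z \<ge> 0" shows "I1 z \<ge> 0"
  unfolding I1_def using assms
  by (intro mult_nonneg_nonneg suminf_nonneg summable_I1) auto

lemma term_bound:
  fixes s :: real and n :: nat
  assumes "s \<ge> 0"
  shows "s^(2*n+1) / (fact n * fact (Suc n)) \<le> s^(2*n)/(2*(fact n)^2) + s^(2*n+2)/(2*(fact (Suc n))^2)"
proof -
  define P where "P = s^(2*n)"
  define F :: real where "F = fact n"
  define m :: real where "m = real (Suc n)"
  have P: "P \<ge> 0" unfolding P_def using assms by simp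
  have F: "F > 0" unfolding F_def by simp
  have m: "m > 0" unfolding m_def by simp
  have fs: "(fact (Suc n) :: real) = m * F" unfolding m_def F_def by simp
  have key: "2 * m * s \<le> (m^2) + (s^2)"
    using sum_squares_ge_zero[of "m - s" 0] by (simp add: power2_eq_square algebra_simps)
  have c: "P / (2*m^2*F^2) \<ge> 0" using P F m by simp
  have "s^(2*n+1) / (fact n * fact (Suc n)) = (P / (2*m^2*F^2)) * (2 * m * s)"
    unfolding fs using F m by (simp add: P_def F_def power2_eq_square field_simps)
  also have "\<dots> \<le> (P / (2*m^2*F^2)) * (m^2 + s^2)"
    by (rule mult_left_mono[OF key c])
  also have "\<dots> = s^(2*n)/(2*(fact n)^2) + s^(2*n+2)/(2*(fact (Suc n))^2)"
    unfolding fs using F m by (simp add: P_def F_def power2_eq_square field_simps)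
  finally show ?thesis .
qed

lemma I1_le: assumes "z \<ge> 0" shows "I1 z \<le> besselI0 z - 1/2"
proof -
  define s where "s = z/2"
  have s: "s \<ge> 0" using assms s_def by simp
  define A where "A n = cI n * (z^2/4)^n" for n
  have A_s: "A n = s^(2*n)/(fact n)^2" for n
    by (simp add: A_def cI_def s_def power_mult power_divide power2_eq_square)
  have sA: "summable A" unfolding A_def by (rule summable_cI)
  have sA1: "summable (\<lambda>n. A (Suc n))" using sA by (simp add: summable_Suc_iff)
  have I0A: "besselI0 z = suminf A" unfolding A_def I0_eq ..
  have "I1 z = s * (\<Sum>n. (s^2)^n / (fact n * fact (Suc n)))"
    by (simp add: I1_def s_def power_divide)
  also have "\<dots> = (\<Sum>n. s * ((s^2)^n / (fact n * fact (Suc n))))"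
    by (rule suminf_mult[symmetric]) (rule summable_I1)
  also have "\<dots> = (\<Sum>n. s^(2*n+1) / (fact n * fact (Suc n)))"
    by (simp add: power_mult[symmetric] mult.commute)
  also have "\<dots> \<le> (\<Sum>n. A n / 2 + A (Suc n) / 2)"
  proof (rule suminf_le)
    show "summable (\<lambda>n. s^(2*n+1) / (fact n * fact (Suc n)))"
      using summable_mult[OF summable_I1[of "s^2"], of s]
      by (simp add: power_mult[symmetric] mult.commute)
    show "summable (\<lambda>n. A n / 2 + A (Suc n) / 2)"
      by (intro summable_add summable_divide sA sA1)
    fix n
    show "s^(2*n+1) / (fact n * fact (Suc n)) \<le> A n / 2 + A (Suc n) / 2"
      using term_bound[OF s, of n] unfolding A_s by simp
  qed
  also have "\<dots> = suminf A / 2 + (suminf A - A 0) / 2"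
    using suminf_add[OF summable_divide[OF sA, of 2] summable_divide[OF sA1, of 2]]
      suminf_divide[OF sA, of 2] suminf_divide[OF sA1, of 2] suminf_split_head[OF sA]
    by simp
  also have "\<dots> = besselI0 z - 1/2" using I0A by (auto simp: A_def cI_def field_simps)
  finally show ?thesis .
qed

lemma meas_ind:
  assumes "continuous_on UNIV (g::real\<Rightarrow>real)" "A \<in> sets borel"
  shows "(\<lambda>t. indicator A t * g t) \<in> borel_measurable lborel"
proof -
  have g: "g \<in> borel_measurable lborel" using borel_measurable_continuous_onI[OF assms(1)] by simp
  have i: "indicator A \<in> borel_measurable lborel" using assms(2) by simp
  show ?thesis using borel_measurable_times[OF i g] .
qed

definition G :: "real \<Rightarrow> real \<Rightarrow> real" where
  "G a t = indicator {0..} t * (cosh t * exp (- (a * sinh t)))"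

lemma G_meas: "G a \<in> borel_measurable lborel"
  unfolding G_def by (rule meas_ind) (auto intro!: continuous_intros)

lemma G_meas': "G a \<in> borel_measurable borel"
  using G_meas by simp

lemma G_nn: "(\<integral>\<^sup>+t. ennreal (G a t) \<partial>lborel) = ennreal (1/a)" if a: "a > 0"
proof -
  have "(\<integral>\<^sup>+t. ennreal (G a t) \<partial>lborel) =
        (\<integral>\<^sup>+t. ennreal (cosh t * exp (- (a * sinh t))) * indicator {0..} t \<partial>lborel)"
    by (rule nn_integral_cong) (simp add: G_def split: split_indicator)
  also have "\<dots> = 0 - (- exp (- (a * sinh 0)) / a)"
  proof (rule nn_integral_FTC_atLeast)
    show "(\<lambda>t. cosh t * exp (- (a * sinh t))) \<in> borel_measurable borel"
      by (intro borel_measurable_continuous_onI continuous_intros)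
    show "((\<lambda>t. - exp (- (a * sinh t)) / a) has_real_derivative cosh t * exp (- (a * sinh t))) (at t)" for t
      using a by (auto intro!: derivative_eq_intros simp: field_simps)
    show "0 \<le> cosh t * exp (- (a * sinh t))" for t
      by (simp add: order_less_imp_le)
    have "filterlim (\<lambda>t. - (a * sinh t)) at_bot at_top"
      using a by (auto simp: filterlim_uminus_at_bot intro!: filterlim_tendsto_pos_mult_at_top sinh_real_at_top)
    then have lim: "((\<lambda>t. exp (- (a * sinh t))) \<longlongrightarrow> 0) at_top"
      by (rule filterlim_compose[OF exp_at_bot])
    show "((\<lambda>t. - exp (- (a * sinh t)) / a) \<longlongrightarrow> 0) at_top"
      using tendsto_divide[OF tendsto_minus[OF lim] tendsto_const[of a]] a by simp
  qed
  also have "\<dots> = 1/a" by simp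
  finally show ?thesis by simp
qed

lemma G_nonneg: "G a t \<ge> 0"
  by (simp add: G_def)

lemma G_integrable: "a > 0 \<Longrightarrow> integrable lborel (G a)"
  by (rule integrableI_nonneg) (auto simp: G_nn G_meas G_meas' G_nonneg)

lemma G_integral: "a > 0 \<Longrightarrow> integral\<^sup>L lborel (G a) = 1/a"
  by (subst integral_eq_nn_integral) (auto simp: G_nn G_meas G_meas' G_nonneg)

definition Kint :: "nat \<Rightarrow> real \<Rightarrow> real" where
  "Kint k z = integral\<^sup>L lborel (\<lambda>t. indicator {0..} t * (cosh t ^ k * exp (- (z * cosh t))))"

lemma K0_eq: "besselK0 z = Kint 0 z"
  by (simp add: besselK0_def Kint_def set_lebesgue_integral_def)

lemma Kf_meas: "(\<lambda>t::real. indicator {0..} t * (cosh t ^ k * exp (- ((z::real) * cosh t)))) \<in> borel_measurable lborel"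
  by (rule meas_ind[where g="\<lambda>t. cosh t ^ k * exp (- (z * cosh t))"]) (auto intro!: continuous_intros)

lemma cosh_ge_sinh: "sinh (t::real) \<le> cosh t"
  by (simp add: cosh_def sinh_def)

lemma x_exp_bound: assumes "a > 0" shows "(x::real) * exp (- (a/2 * x)) \<le> 2/a"
proof -
  have "a/2 * x \<le> exp (a/2 * x)" using exp_ge_add_one_self[of "a/2*x"] by linarith
  then have "x \<le> 2/a * exp (a/2 * x)" using assms by (simp add: field_simps)
  then have "x * exp (- (a/2 * x)) \<le> 2/a * exp (a/2 * x) * exp (- (a/2 * x))"
    by (rule mult_right_mono) simp
  also have "\<dots> = 2/a" by (simp add: exp_minus field_simps)
  finally show ?thesis .
qed

lemma Kf_bound:
  assumes a: "a > 0" and k: "k \<le> 2"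
  shows "\<bar>indicator {0..} t * (cosh t ^ k * exp (- (a * cosh t)))\<bar> \<le> 2/a * G (a/2) t"
proof (cases "t \<ge> 0")
  case True
  have c1: "cosh t \<ge> 1" by (rule cosh_real_ge_1)
  have "cosh t ^ k \<le> cosh t ^ 2" using power_increasing[OF k c1] by simp
  then have "cosh t ^ k * exp (- (a * cosh t)) \<le> cosh t ^ 2 * exp (- (a * cosh t))"
    by (rule mult_right_mono) simp
  also have "\<dots> = cosh t * (cosh t * exp (- (a/2 * cosh t))) * exp (- (a/2 * cosh t))"
  proof -
    have "exp (- (a * cosh t)) = exp (- (a/2 * cosh t)) * exp (- (a/2 * cosh t))"
      by (subst mult_exp_exp) simp
    then show ?thesis by (simp add: power2_eq_square mult_ac)
  qed
  also have "\<dots> \<le> cosh t * (2/a) * exp (- (a/2 * sinh t))"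
  proof (rule mult_mono)
    show "cosh t * (cosh t * exp (- (a / 2 * cosh t))) \<le> cosh t * (2 / a)"
      using x_exp_bound[OF a, of "cosh t"] c1 by (intro mult_left_mono) auto
    show "exp (- (a / 2 * cosh t)) \<le> exp (- (a / 2 * sinh t))"
      using a cosh_ge_sinh[of t] by simp
  qed (use a c1 in auto)
  finally show ?thesis using True by (simp add: G_def abs_mult mult_ac)
qed (simp add: G_def)

lemma Kf_integrable:
  assumes a: "(a::real) > 0" and k: "k \<le> 2"
  shows "integrable lborel (\<lambda>t. indicator {0..} t * (cosh t ^ k * exp (- (a * cosh t))))"
proof (rule Bochner_Integration.integrable_bound[OF _ Kf_meas])
  show "integrable lborel (\<lambda>t. 2/a * G (a/2) t)"
    using a by (intro integrable_mult_right G_integrable) simp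
  show "AE t in lborel. norm (indicator {0..} t * (cosh t ^ k * exp (- (a * cosh t)))) \<le> norm (2/a * G (a/2) t)"
    using Kf_bound[OF a k] a by (auto simp: G_nonneg)
qed

lemma K0_lower:
  assumes z: "z > 0" and T: "T \<ge> 0"
  shows "T * exp (- (z * cosh T)) \<le> Kint 0 z"
proof -
  have "T * exp (- (z * cosh T)) = integral\<^sup>L lborel (\<lambda>t. indicator {0..T} t * exp (- (z * cosh T)))"
    using T by simp
  also have "\<dots> \<le> Kint 0 z"
    unfolding Kint_def
  proof (rule integral_mono)
    show "integrable lborel (\<lambda>t. indicator {0..T} t * exp (- (z * cosh T)))"
      using T by (intro integrable_mult_left integrable_real_indicator) auto
    show "integrable lborel (\<lambda>t. indicator {0..} t * (cosh t ^ 0 * exp (- (z * cosh t))))"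
      using Kf_integrable[OF z, of 0] by simp
    fix t
    show "indicator {0..T} t * exp (- (z * cosh T)) \<le> indicator {0..} t * (cosh t ^ 0 * exp (- (z * cosh t)))"
      using z by (auto split: split_indicator simp: cosh_real_nonneg_le_iff)
  qed
  finally show ?thesis .
qed

lemma K0_pos: "z > 0 \<Longrightarrow> Kint 0 z > 0"
  using K0_lower[of z 1] by (smt (verit) exp_gt_zero)

lemma K0_le_K1: assumes z: "z > 0" shows "Kint 0 z \<le> Kint 1 z"
  unfolding Kint_def
  by (rule integral_mono[OF Kf_integrable[OF z] Kf_integrable[OF z]])
     (auto split: split_indicator intro!: mult_right_mono simp: cosh_real_ge_1)

lemma K1_le: assumes z: "z > 0" shows "Kint 1 z \<le> 1/z"
proof -
  have "Kint 1 z \<le> integral\<^sup>L lborel (G z)"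
    unfolding Kint_def
    by (rule integral_mono[OF Kf_integrable[OF z] G_integrable[OF z]])
       (use z cosh_ge_sinh in \<open>auto simp: G_def split: split_indicator intro!: mult_left_mono\<close>)
  then show ?thesis using G_integral[OF z] by simp
qed

lemma exp_taylor2: "\<bar>exp (x::real) - 1 - x\<bar> \<le> x^2 / 2 * exp \<bar>x\<bar>"
proof -
  obtain t where t: "\<bar>t\<bar> \<le> \<bar>x\<bar>" "exp x = (\<Sum>m<2. x^m / fact m) + exp t / fact 2 * x^2"
    using Maclaurin_exp_le[of x 2] by blast
  have e: "exp x - 1 - x = exp t / 2 * x^2" using t(2) by (simp add: numeral_2_eq_2)
  have "exp t \<le> exp \<bar>x\<bar>" using t(1) by simp
  then have "exp t / 2 * x^2 \<le> x^2 / 2 * exp \<bar>x\<bar>" by (simp add: mult_right_mono field_simps)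
  moreover have "\<bar>exp x - 1 - x\<bar> = exp t / 2 * x^2" unfolding e by simp
  ultimately show ?thesis by simp
qed

lemma pt_bound:
  fixes z h c :: real
  assumes z: "z > 0" and c: "c \<ge> 0" and h: "\<bar>h\<bar> \<le> z/2"
  shows "\<bar>exp (- ((z + h) * c)) - exp (- (z * c)) + h * (c * exp (- (z * c)))\<bar>
           \<le> h^2 / 2 * (c^2 * exp (- (z/2 * c)))"
proof -
  have e1: "exp (- ((z + h) * c)) = exp (- (z * c)) * exp (- (h * c))"
    by (subst exp_add[symmetric]) (simp add: algebra_simps)
  have "exp (- ((z + h) * c)) - exp (- (z * c)) + h * (c * exp (- (z * c)))
        = exp (- (z * c)) * (exp (- (h * c)) - 1 - (- (h * c)))"
    unfolding e1 by (simp add: algebra_simps)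
  then have "\<bar>exp (- ((z + h) * c)) - exp (- (z * c)) + h * (c * exp (- (z * c)))\<bar>
        = exp (- (z * c)) * \<bar>exp (- (h * c)) - 1 - (- (h * c))\<bar>"
    by (simp add: abs_mult)
  also have "\<dots> \<le> exp (- (z * c)) * ((- (h * c))^2 / 2 * exp \<bar>- (h * c)\<bar>)"
    by (rule mult_left_mono[OF exp_taylor2]) simp
  also have "\<dots> \<le> exp (- (z * c)) * ((- (h * c))^2 / 2 * exp (z/2 * c))"
  proof -
    have "\<bar>h\<bar> * c \<le> z/2 * c" by (rule mult_right_mono[OF h c])
    then have "\<bar>- (h * c)\<bar> \<le> z/2 * c" using c by (simp add: abs_mult)
    then show ?thesis by (intro mult_left_mono) auto
  qed
  also have "\<dots> = h^2 / 2 * (c^2 * (exp (- (z * c)) * exp (z/2 * c)))"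
    by (simp add: power2_eq_square)
  also have "exp (- (z * c)) * exp (z/2 * c) = exp (- (z/2 * c))"
    by (subst exp_add[symmetric]) (simp add: algebra_simps)
  finally show ?thesis .
qed

lemma K0_quad:
  fixes z h :: real
  assumes z: "z > 0" and h: "\<bar>h\<bar> \<le> z/2"
  shows "\<bar>Kint 0 (z + h) - Kint 0 z + h * Kint 1 z\<bar> \<le> h^2 / 2 * Kint 2 (z/2)"
proof -
  define F where "F = (\<lambda>t. indicator {0..} t *
      (exp (- ((z + h) * cosh t)) - exp (- (z * cosh t)) + h * (cosh t * exp (- (z * cosh t)))))"
  have zh: "z + h > 0" using z h by linarith
  have z2: "z/2 > 0" using z by simp
  have i0: "integrable lborel (\<lambda>t. indicator {0..} t * (cosh t ^ 0 * exp (- ((z+h) * cosh t))))"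
    by (rule Kf_integrable[OF zh]) simp
  have i0': "integrable lborel (\<lambda>t. indicator {0..} t * (cosh t ^ 0 * exp (- (z * cosh t))))"
    by (rule Kf_integrable[OF z]) simp
  have i1: "integrable lborel (\<lambda>t. indicator {0..} t * (cosh t ^ 1 * exp (- (z * cosh t))))"
    by (rule Kf_integrable[OF z]) simp
  have i2: "integrable lborel (\<lambda>t. indicator {0..} t * (cosh t ^ 2 * exp (- (z/2 * cosh t))))"
    by (rule Kf_integrable[OF z2]) simp
  have "Kint 0 (z + h) - Kint 0 z + h * Kint 1 z =
        integral\<^sup>L lborel (\<lambda>t. indicator {0..} t * (cosh t ^ 0 * exp (- ((z+h) * cosh t)))
           - indicator {0..} t * (cosh t ^ 0 * exp (- (z * cosh t)))
           + h * (indicator {0..} t * (cosh t ^ 1 * exp (- (z * cosh t)))))"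
    unfolding Kint_def
    by (subst Bochner_Integration.integral_add[OF Bochner_Integration.integrable_diff[OF i0 i0'] integrable_mult_right[OF i1]],
        subst Bochner_Integration.integral_diff[OF i0 i0'], subst Bochner_Integration.integral_mult_right[OF i1]) simp
  also have "\<dots> = integral\<^sup>L lborel F"
    unfolding F_def by (rule Bochner_Integration.integral_cong) (simp_all add: algebra_simps)
  finally have eq: "Kint 0 (z + h) - Kint 0 z + h * Kint 1 z = integral\<^sup>L lborel F" .
  have iF: "integrable lborel F"
  proof -
    have "integrable lborel (\<lambda>t. indicator {0..} t * (cosh t ^ 0 * exp (- ((z+h) * cosh t)))
         - indicator {0..} t * (cosh t ^ 0 * exp (- (z * cosh t)))
         + h * (indicator {0..} t * (cosh t ^ 1 * exp (- (z * cosh t)))))"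
      by (intro Bochner_Integration.integrable_add Bochner_Integration.integrable_diff integrable_mult_right i0 i0' i1)
    then show ?thesis unfolding F_def
      by (rule Bochner_Integration.integrable_cong[THEN iffD1, rotated 2]) (simp_all add: algebra_simps)
  qed
  have "\<bar>integral\<^sup>L lborel F\<bar> \<le> integral\<^sup>L lborel (\<lambda>t. norm (F t))"
    using integral_norm_bound[of lborel F] by (simp only: real_norm_def)
  also have "\<dots> \<le> integral\<^sup>L lborel (\<lambda>t. h^2 / 2 * (indicator {0..} t * (cosh t ^ 2 * exp (- (z/2 * cosh t)))))"
  proof (rule integral_mono)
    show "integrable lborel (\<lambda>t. norm (F t))"
      by (rule integrable_norm[OF iF])
    show "integrable lborel (\<lambda>t. h^2 / 2 * (indicator {0..} t * (cosh t ^ 2 * exp (- (z/2 * cosh t)))))"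
      by (rule integrable_mult_right[OF i2])
    fix t :: real
    have pb: "\<bar>exp (- ((z + h) * cosh t)) - exp (- (z * cosh t)) + h * (cosh t * exp (- (z * cosh t)))\<bar>
           \<le> h^2 / 2 * (cosh t ^ 2 * exp (- (z/2 * cosh t)))"
      using pt_bound[OF z _ h, of "cosh t"] cosh_real_ge_1[of t] by simp
    show "norm (F t) \<le> h^2 / 2 * (indicator {0..} t * (cosh t ^ 2 * exp (- (z/2 * cosh t))))"
    proof (cases "t \<ge> 0")
      case True
      then show ?thesis using pb unfolding F_def by simp
    next
      case False
      then show ?thesis unfolding F_def by simp
    qed
  qed
  also have "\<dots> = h^2 / 2 * Kint 2 (z/2)"
    unfolding Kint_def by (rule Bochner_Integration.integral_mult_right[OF i2])
  finally show ?thesis using eq by simp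
qed

lemma K0_deriv:
  assumes z: "z > 0"
  shows "((Kint 0) has_field_derivative - Kint 1 z) (at z)"
  unfolding has_field_derivative_iff
proof (rule LIM_zero_cancel, rule Lim_null_comparison)
  define C where "C = Kint 2 (z/2) / 2"
  show "\<forall>\<^sub>F w in at z. norm ((Kint 0 w - Kint 0 z) / (w - z) - - Kint 1 z) \<le> \<bar>w - z\<bar> * C"
    unfolding eventually_at
  proof (intro exI[of _ "z/2"] conjI ballI impI)
    show "z/2 > 0" using z by simp
    fix w assume w: "w \<noteq> z \<and> dist w z < z/2"
    define h where "h = w - z"
    have h0: "h \<noteq> 0" and hb: "\<bar>h\<bar> \<le> z/2" using w by (auto simp: h_def dist_real_def)
    have wz: "w = z + h" by (simp add: h_def)
    have "(Kint 0 w - Kint 0 z) / (w - z) - - Kint 1 z = (Kint 0 (z + h) - Kint 0 z + h * Kint 1 z) / h"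
      using h0 unfolding wz by (simp add: field_simps)
    then have "norm ((Kint 0 w - Kint 0 z) / (w - z) - - Kint 1 z) = \<bar>Kint 0 (z + h) - Kint 0 z + h * Kint 1 z\<bar> / \<bar>h\<bar>"
      by (simp add: abs_divide)
    also have "\<dots> \<le> (h^2 / 2 * Kint 2 (z/2)) / \<bar>h\<bar>"
      by (rule divide_right_mono[OF K0_quad[OF z hb]]) simp
    also have "\<dots> = \<bar>w - z\<bar> * C"
    proof -
      have hh: "h^2 = \<bar>h\<bar> * \<bar>h\<bar>" by (simp add: power2_eq_square)
      have hp: "\<bar>h\<bar> > 0" using h0 by simp
      have "(\<bar>h\<bar> * \<bar>h\<bar> / 2 * Kint 2 (z/2)) / \<bar>h\<bar> = \<bar>h\<bar> * (Kint 2 (z/2) / 2)"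
        using hp by (simp add: field_simps)
      then show ?thesis by (simp only: hh C_def h_def[symmetric])
    qed
    finally show "norm ((Kint 0 w - Kint 0 z) / (w - z) - - Kint 1 z) \<le> \<bar>w - z\<bar> * C" .
  qed
  have "((\<lambda>w. \<bar>w - z\<bar> * C) \<longlongrightarrow> \<bar>z - z\<bar> * C) (at z)"
    by (intro tendsto_intros)
  then show "((\<lambda>w. \<bar>w - z\<bar> * C) \<longlongrightarrow> 0) (at z)" by simp
qed

lemma IK0_alt: "IK0 = (\<lambda>z. besselI0 z * Kint 0 z)"
  by (rule ext) (simp add: IK0_def K0_eq)

lemma IK0_deriv:
  assumes z: "z > 0"
  shows "(IK0 has_field_derivative (I1 z * Kint 0 z - besselI0 z * Kint 1 z)) (at z)"
  unfolding IK0_alt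
  using DERIV_mult[OF I0_deriv K0_deriv[OF z]] by (simp add: algebra_simps)

lemma deriv_IK0: "z > 0 \<Longrightarrow> deriv IK0 z = I1 z * Kint 0 z - besselI0 z * Kint 1 z"
  by (rule DERIV_imp_deriv[OF IK0_deriv])

lemma deriv_IK0_neg: assumes z: "z > 0" shows "deriv IK0 z < 0"
proof -
  have k0: "Kint 0 z > 0" by (rule K0_pos[OF z])
  have i0: "besselI0 z > 0" using I0_ge1[of z] by simp
  have "I1 z * Kint 0 z \<le> (besselI0 z - 1/2) * Kint 0 z"
    using I1_le[of z] z k0 by (intro mult_right_mono) auto
  also have "\<dots> < besselI0 z * Kint 0 z" using k0 by (simp add: algebra_simps)
  also have "\<dots> \<le> besselI0 z * Kint 1 z" using K0_le_K1[OF z] i0 by (intro mult_left_mono) auto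
  finally show ?thesis using deriv_IK0[OF z] by simp
qed

lemma z_deriv_IK0: assumes z: "z > 0" shows "z * deriv IK0 z \<ge> - besselI0 z"
proof -
  have k0: "Kint 0 z > 0" by (rule K0_pos[OF z])
  have i0: "besselI0 z > 0" using I0_ge1[of z] by simp
  have a: "z * (I1 z * Kint 0 z) \<ge> 0" using I1_nonneg[of z] z k0 by simp
  have "z * Kint 1 z \<le> 1" using K1_le[OF z] z by (simp add: field_simps)
  then have "z * (besselI0 z * Kint 1 z) \<le> besselI0 z"
    using i0 mult_left_mono[of "z * Kint 1 z" 1 "besselI0 z"] by (simp add: mult_ac)
  moreover have "z * deriv IK0 z = z*(I1 z*Kint 0 z) - z*(besselI0 z*Kint 1 z)"
    unfolding deriv_IK0[OF z] by (simp only: algebra_simps)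
  ultimately show ?thesis using a by linarith
qed

lemma IK0_pos: "z > 0 \<Longrightarrow> IK0 z > 0"
  using I0_ge1[of z] K0_pos[of z] by (simp add: IK0_alt)

lemma IK0_strict_dec:
  assumes "0 < x" "x < y" shows "IK0 y < IK0 x"
proof -
  show ?thesis
  proof (rule DERIV_neg_imp_decreasing[OF assms(2)])
    fix t assume "x \<le> t" "t \<le> y"
    then have t: "t > 0" using assms by linarith
    show "\<exists>y. DERIV IK0 t :> y \<and> y < 0"
      using IK0_deriv[OF t] deriv_IK0_neg[OF t] deriv_IK0[OF t] by metis
  qed
qed

lemma I0_le_exp: assumes x: "x \<ge> 0" shows "besselI0 x \<le> exp x"
proof -
  define a where "a k = (x/2)^k / fact k" for k
  have aeq: "(\<lambda>n. (x/2)^n /\<^sub>R fact n) = a"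
    by (rule ext) (simp add: a_def field_simps)
  have sa: "a sums exp (x/2)"
    using exp_converges[of "x/2"] unfolding aeq .
  have summ: "summable a" using sa by (rule sums_summable)
  have S: "suminf a = exp (x/2)" using sa by (rule sums_unique[symmetric])
  have an: "a k \<ge> 0" for k using x by (simp add: a_def)
  have ak: "a k \<le> exp (x/2)" for k
    using sum_le_suminf[OF summ, of "{k}"] an S by simp
  have eqA: "cI k * (x^2/4)^k = a k * a k" for k
  proof -
    have "(x^2/4)^k = ((x/2)^2)^k" by (simp add: power_divide)
    also have "\<dots> = ((x/2)^k)^2" unfolding power_mult[symmetric] by (simp add: mult.commute)
    finally show ?thesis by (simp add: cI_def a_def power2_eq_square)
  qed
  have "besselI0 x = (\<Sum>k. a k * a k)" unfolding I0_eq eqA ..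
  also have "\<dots> \<le> (\<Sum>k. exp (x/2) * a k)"
  proof (rule suminf_le)
    show "a k * a k \<le> exp (x/2) * a k" for k using ak an by (intro mult_right_mono) auto
    show "summable (\<lambda>k. a k * a k)" using summable_cI[of "x^2/4"] eqA by simp
    show "summable (\<lambda>k. exp (x/2) * a k)" by (intro summable_mult summ)
  qed
  also have "\<dots> = exp (x/2) * exp (x/2)" using suminf_mult[OF summ] S by simp
  also have "\<dots> = exp x" by (simp add: mult_exp_exp)
  finally show ?thesis .
qed

lemma exp_lin_to_zero: assumes d: "d > 0" shows "((\<lambda>r::real. exp (- (d * r))) \<longlongrightarrow> 0) at_top"
proof -
  have "filterlim (\<lambda>r::real. d * r) at_top at_top"
    by (rule filterlim_tendsto_pos_mult_at_top[OF tendsto_const d filterlim_ident])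
  then have "filterlim (\<lambda>r::real. - (d * r)) at_bot at_top"
    by (simp add: filterlim_uminus_at_bot)
  then show ?thesis by (rule filterlim_compose[OF exp_at_bot])
qed

lemma expK0_to_zero: "((\<lambda>r. exp r * Kint 0 r) \<longlongrightarrow> 0) at_top"
proof -
  define s where "s r t = indicator {0..} t * exp (- ((cosh t - 1) * r))" for r t :: real
  define w where "w t = exp 1 * (indicator {0..} t * (cosh t ^ 0 * exp (- (1 * cosh t))))" for t :: real
  have eq: "exp r * Kint 0 r = integral\<^sup>L lborel (s r)" for r
  proof -
    have "exp r * Kint 0 r = integral\<^sup>L lborel (\<lambda>t. exp r * (indicator {0..} t * (cosh t ^ 0 * exp (- (r * cosh t)))))"
      unfolding Kint_def by simp
    also have "\<dots> = integral\<^sup>L lborel (s r)"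
    proof (rule Bochner_Integration.integral_cong[OF refl])
      fix t
      have "exp r * exp (- (r * cosh t)) = exp (- ((cosh t - 1) * r))"
        by (subst exp_add[symmetric]) (simp add: algebra_simps)
      then show "exp r * (indicator {0..} t * (cosh t ^ 0 * exp (- (r * cosh t)))) = s r t"
        by (simp add: s_def)
    qed
    finally show ?thesis .
  qed
    have m1: "(\<lambda>t. 0::real) \<in> borel_measurable lborel" by simp
    have m2: "s r \<in> borel_measurable lborel" for r
      unfolding s_def by (rule meas_ind) (auto intro!: continuous_intros)
    have iw: "integrable lborel w"
      unfolding w_def by (intro integrable_mult_right Kf_integrable) auto
    have lim: "AE t in lborel. ((\<lambda>r. s r t) \<longlongrightarrow> 0) at_top"
      using AE_lborel_singleton[of 0]
    proof (rule AE_mp, intro AE_I2 impI)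
      fix t :: real assume t: "t \<noteq> 0"
      show "((\<lambda>r. s r t) \<longlongrightarrow> 0) at_top"
      proof (cases "t > 0")
        case True
        have "cosh t > 1" using True cosh_real_strict_mono[of 0 t] by simp
        then have "((\<lambda>r. exp (- ((cosh t - 1) * r))) \<longlongrightarrow> 0) at_top"
          by (intro exp_lin_to_zero) simp
        then show ?thesis using True by (simp add: s_def)
      next
        case False
        then show ?thesis using t by (simp add: s_def)
      qed
    qed
    have bd: "\<forall>\<^sub>F r in at_top. AE t in lborel. norm (s r t) \<le> w t"
      unfolding eventually_at_top_linorder
    proof (intro exI[of _ 1] allI impI AE_I2)
      fix r t :: real assume r: "1 \<le> r"
      have c: "cosh t - 1 \<ge> 0" using cosh_real_ge_1[of t] by simp
      have "(cosh t - 1) * 1 \<le> (cosh t - 1) * r" by (rule mult_left_mono[OF r c])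
      then have "exp (- ((cosh t - 1) * r)) \<le> exp (1 - cosh t)" by simp
      moreover have "exp 1 * exp (- cosh t) = exp (1 - cosh t)"
        by (subst exp_add[symmetric]) simp
      ultimately show "norm (s r t) \<le> w t"
        by (auto simp: s_def w_def split: split_indicator)
    qed
    have "((\<lambda>r. integral\<^sup>L lborel (s r)) \<longlongrightarrow> integral\<^sup>L lborel (\<lambda>t::real. 0::real)) at_top"
      by (rule integral_dominated_convergence_at_top[OF m1 m2 iw lim bd])
  then show ?thesis unfolding eq by simp
qed

lemma IK0_small: assumes y: "y > 0" shows "\<exists>b>0. IK0 b < y"
proof -
  have "\<forall>\<^sub>F r in at_top. exp r * Kint 0 r < y"
    using expK0_to_zero y by (rule order_tendstoD)
  moreover have "\<forall>\<^sub>F r in at_top. (r::real) > 0" by (rule eventually_gt_at_top)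
  ultimately have "\<forall>\<^sub>F r in at_top. r > 0 \<and> exp r * Kint 0 r < y" by eventually_elim auto
  then obtain N where N: "\<And>r. r \<ge> N \<Longrightarrow> r > 0 \<and> exp r * Kint 0 r < y"
    unfolding eventually_at_top_linorder by blast
  define r where "r = N"
  have r: "r > 0" "exp r * Kint 0 r < y" using N[of N] by (auto simp: r_def)
  have "IK0 r \<le> exp r * Kint 0 r"
    unfolding IK0_alt using I0_le_exp[of r] K0_pos[OF r(1)] r(1)
    by (intro mult_right_mono) auto
  then show ?thesis using r by (intro exI[of _ r]) auto
qed

lemma IK0_large: assumes y: "y > 0" shows "\<exists>a>0. IK0 a > y"
proof -
  define T where "T = exp 1 * y + 1"
  define a where "a = 1 / cosh T"
  have T: "T \<ge> 0" using y by (simp add: T_def)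
  have a: "a > 0" by (simp add: a_def)
  have "T * exp (- (a * cosh T)) \<le> Kint 0 a" by (rule K0_lower[OF a T])
  moreover have "a * cosh T = 1" by (simp add: a_def)
  ultimately have "T * exp (-1) \<le> Kint 0 a" by simp
  moreover have "y < T * exp (-1)"
    by (simp add: T_def exp_minus field_simps)
  moreover have "Kint 0 a \<le> IK0 a"
    unfolding IK0_alt using I0_ge1[of a] K0_pos[OF a]
    using mult_right_mono[of 1 "besselI0 a" "Kint 0 a"] by simp
  ultimately show ?thesis using a by (intro exI[of _ a]) auto
qed

lemma IK0_cont: "0 < a \<Longrightarrow> continuous_on {a..b} IK0"
  by (intro continuous_at_imp_continuous_on ballI DERIV_isCont[OF IK0_deriv]) auto

lemma IK0_surj: assumes y: "y > 0" shows "\<exists>z>0. IK0 z = y"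
proof -
  obtain a where a: "a > 0" "IK0 a > y" using IK0_large[OF y] by blast
  obtain b where b: "b > 0" "IK0 b < y" using IK0_small[OF y] by blast
  have ab: "a \<le> b"
  proof (rule ccontr)
    assume "\<not> a \<le> b"
    then have "IK0 a < IK0 b" using IK0_strict_dec[OF b(1)] by simp
    then show False using a b by simp
  qed
  obtain x where "a \<le> x" "x \<le> b" "IK0 x = y"
    using IVT2'[of IK0 b y a, OF _ _ ab IK0_cont[OF a(1)]] a b by auto
  then show ?thesis using a by (intro exI[of _ x]) auto
qed

lemma IK0_inj: "0 < x \<Longrightarrow> 0 < y \<Longrightarrow> IK0 x = IK0 y \<Longrightarrow> x = y"
  by (cases x y rule: linorder_cases) (auto dest: IK0_strict_dec)

lemma kappa0_props:
  assumes c: "\<alpha> + \<beta> > 0" and R: "R > 0"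
  shows "kappa0 \<alpha> \<beta> R > 0" "IK0 (R * kappa0 \<alpha> \<beta> R) = 1 / ((\<alpha> + \<beta>) * R)"
proof -
  define y where "y = 1 / ((\<alpha> + \<beta>) * R)"
  have y: "y > 0" using c R by (simp add: y_def)
  obtain z where z: "z > 0" "IK0 z = y" using IK0_surj[OF y] by blast
  have P: "(\<kappa> > 0 \<and> besselK0 (\<kappa> * R) * besselI0 (\<kappa> * R) = y) \<longleftrightarrow> (\<kappa> > 0 \<and> IK0 (R * \<kappa>) = y)" for \<kappa>
    by (simp add: IK0_def mult.commute)
  have ex1: "\<exists>!\<kappa>. \<kappa> > 0 \<and> besselK0 (\<kappa> * R) * besselI0 (\<kappa> * R) = y"
  proof (rule ex1I[of _ "z / R"])
    show "z / R > 0 \<and> besselK0 (z / R * R) * besselI0 (z / R * R) = y"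
      unfolding P using z R by simp
    fix k assume "k > 0 \<and> besselK0 (k * R) * besselI0 (k * R) = y"
    then have k: "k > 0" "IK0 (R * k) = y" unfolding P by auto
    have "R * k = z" using IK0_inj[of "R*k" z] k z R by simp
    then show "k = z / R" using R by (simp add: field_simps)
  qed
  have "kappa0 \<alpha> \<beta> R > 0 \<and> besselK0 (kappa0 \<alpha> \<beta> R * R) * besselI0 (kappa0 \<alpha> \<beta> R * R) = y"
    unfolding kappa0_def y_def[symmetric] by (rule theI'[OF ex1])
  then show "kappa0 \<alpha> \<beta> R > 0" "IK0 (R * kappa0 \<alpha> \<beta> R) = 1 / ((\<alpha> + \<beta>) * R)"
    using y_def by (auto simp: IK0_def mult.commute)
qed

lemma t0_unfold:
  assumes a: "\<alpha> > 0" and b: "\<beta> > 0" and R: "R > 0"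
  defines "\<kappa> \<equiv> kappa0 \<alpha> \<beta> R"
  defines "z \<equiv> R * \<kappa>"
  defines "p \<equiv> 1 / ((\<alpha> + \<beta>) * R)"
  defines "dp \<equiv> deriv IK0 z"
  shows "\<kappa> > 0" "z > 0" "IK0 z = p" "p > 0" "dp < 0"
    "t0 \<alpha> \<beta> R = (2 * \<kappa> * p) * (\<alpha> * (p * (1 - \<beta> * R) + z * dp)) / (R * dp)"
proof -
  have c: "\<alpha> + \<beta> > 0" using a b by simp
  show k: "\<kappa> > 0" unfolding \<kappa>_def by (rule kappa0_props[OF c R])
  show z: "z > 0" unfolding z_def using k R by simp
  show IKz: "IK0 z = p" unfolding z_def p_def \<kappa>_def by (rule kappa0_props[OF c R])
  show "p > 0" unfolding p_def using c R by simp
  show "dp < 0" unfolding dp_def by (rule deriv_IK0_neg[OF z])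
  have "t0 \<alpha> \<beta> R = 2 * \<kappa> * p * (- \<alpha> * \<beta> * R * p + \<alpha> * \<kappa> * R * dp + \<alpha> * p) / (R * dp)"
    unfolding t0_def Let_def \<kappa>_def[symmetric] z_def[symmetric] dp_def[symmetric] IKz ..
  also have "- \<alpha> * \<beta> * R * p + \<alpha> * \<kappa> * R * dp + \<alpha> * p = \<alpha> * (p * (1 - \<beta> * R) + z * dp)"
    unfolding z_def by (simp add: algebra_simps)
  finally show "t0 \<alpha> \<beta> R = (2 * \<kappa> * p) * (\<alpha> * (p * (1 - \<beta> * R) + z * dp)) / (R * dp)"
    by (simp add: mult.assoc)
qed

lemma sign_lemma:
  fixes X N D :: real
  assumes "X > 0" "D < 0"
  shows "N > 0 \<Longrightarrow> X * N / D < 0" and "N < 0 \<Longrightarrow> X * N / D > 0"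
proof -
  assume "N > 0" then show "X * N / D < 0" using assms by (intro divide_pos_neg) auto
next
  assume "N < 0" then have "X * N < 0" using assms by (simp add: mult_pos_neg)
  then show "X * N / D > 0" using assms by (intro divide_neg_neg) auto
qed

theorem mainTheorem4:
  fixes \<alpha> \<beta> :: real
  assumes "\<alpha> > 0" and "\<beta> > 0"
  shows "(\<forall>\<^sub>F R in at_right 0. t0 \<alpha> \<beta> R < 0) \<and> (\<forall>\<^sub>F R in at_top. t0 \<alpha> \<beta> R > 0)"
proof
  note a = assms(1) and b = assms(2)
  define c where "c = \<alpha> + \<beta>"
  have c: "c > 0" using a b by (simp add: c_def)
  show "\<forall>\<^sub>F R in at_top. t0 \<alpha> \<beta> R > 0"
    unfolding eventually_at_top_linorder
  proof (intro exI[of _ "2 / \<beta>"] allI impI)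
    fix R assume R2: "2 / \<beta> \<le> R"
    have R: "R > 0" using R2 b by (smt (verit) divide_pos_pos)
    have bR: "\<beta> * R \<ge> 2" using R2 b by (simp add: field_simps)
    define \<kappa> where "\<kappa> = kappa0 \<alpha> \<beta> R"
    define z where "z = R * \<kappa>"
    define p where "p = 1 / ((\<alpha> + \<beta>) * R)"
    define dp where "dp = deriv IK0 z"
    note U = t0_unfold[OF a b R, folded \<kappa>_def, folded z_def, folded p_def, folded dp_def]
    have X: "2 * \<kappa> * p > 0" using U(1,4) by simp
    have N1: "p * (1 - \<beta> * R) < 0" using U(4) bR by (simp add: mult_pos_neg)
    have N2: "z * dp < 0" using U(2,5) by (simp add: mult_pos_neg)
    have N: "\<alpha> * (p * (1 - \<beta> * R) + z * dp) < 0" using N1 N2 a by (simp add: mult_pos_neg)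
    have D: "R * dp < 0" using R U(5) by (simp add: mult_pos_neg)
    show "t0 \<alpha> \<beta> R > 0" unfolding U(6) by (rule sign_lemma(2)[OF X D N])
  qed
  define A where "A = besselI0 1"
  have A: "A \<ge> 1" unfolding A_def by (rule I0_ge1)
  define B where "B = IK0 1"
  have B: "B > 0" unfolding B_def by (rule IK0_pos) simp
  define r0 where "r0 = min (1 / (2 * \<beta>)) (min (1 / (c * B)) (1 / (2 * c * A)))"
  have r0: "r0 > 0" unfolding r0_def using b c B A by simp
  show "\<forall>\<^sub>F R in at_right 0. t0 \<alpha> \<beta> R < 0"
    unfolding eventually_at_right_field
  proof (intro exI[of _ r0] conjI allI impI)
    show "r0 > 0" by (rule r0)
    fix R assume R: "R > 0" and Rr: "R < r0"
    have R1: "R < 1 / (2 * \<beta>)" "R < 1 / (c * B)" "R < 1 / (2 * c * A)"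
      using Rr unfolding r0_def by auto
    define \<kappa> where "\<kappa> = kappa0 \<alpha> \<beta> R"
    define z where "z = R * \<kappa>"
    define p where "p = 1 / ((\<alpha> + \<beta>) * R)"
    define dp where "dp = deriv IK0 z"
    note U = t0_unfold[OF a b R, folded \<kappa>_def, folded z_def, folded p_def, folded dp_def]
    have pc: "p = 1 / (c * R)" by (simp add: p_def c_def)
    have pB: "p > B"
    proof -
      have "c * R * B < 1" using R1(2) c B by (simp add: field_simps)
      then show ?thesis unfolding pc using c R by (simp add: field_simps)
    qed
    have pA: "p > 2 * A"
    proof -
      have "c * R * (2 * A) < 1" using R1(3) c A by (simp add: field_simps)
      then show ?thesis unfolding pc using c R by (simp add: field_simps)
    qed
    have bR: "\<beta> * R < 1/2" using R1(1) b by (simp add: field_simps)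
    have z1: "z < 1"
    proof (rule ccontr)
      assume "\<not> z < 1"
      then have "1 \<le> z" by simp
      then have "IK0 z \<le> IK0 1"
        using IK0_strict_dec[of 1 z] by (cases "z = 1") auto
      then show False using U(3) pB by (simp add: B_def)
    qed
    have zdp: "z * dp \<ge> - A"
    proof -
      have "z * dp \<ge> - besselI0 z" unfolding dp_def by (rule z_deriv_IK0[OF U(2)])
      moreover have "besselI0 z \<le> A" unfolding A_def using U(2) z1 by (intro I0_mono) auto
      ultimately show ?thesis by simp
    qed
    have "p * (1 - \<beta> * R) \<ge> p * (1/2)"
      using U(4) bR by (intro mult_left_mono) auto
    then have N0: "p * (1 - \<beta> * R) + z * dp > 0" using zdp pA by simp
    have N: "\<alpha> * (p * (1 - \<beta> * R) + z * dp) > 0" using N0 a by simp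
    have X: "2 * \<kappa> * p > 0" using U(1,4) by simp
    have D: "R * dp < 0" using R U(5) by (simp add: mult_pos_neg)
    show "t0 \<alpha> \<beta> R < 0" unfolding U(6) by (rule sign_lemma(1)[OF X D N])
  qed
qed

end
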